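(* Let $\varepsilon$ be a locally variational source form on $\mathbb{R}\times T^2M$ and let $\alpha'$ be the $2$-form on $T^1M$ given in charts by $\alpha'=\tfrac12 D\,dx\wedge dy+(B_{xx}dx+B_{xy}dy)\wedge d\dot x+(B_{xy}dx+B_{yy}dy)\wedge d\dot y$. Then in every fibered chart $(t,x,y)$ (on its domain) one has $\alpha'-\omega=d\kappa$, where $$\omega=\tfrac12\,D(x,y,0,0)\,dx\wedge dy,$$ $$\kappa=-\Big(\int_0^{\dot x}B_{xx}(x,y,\nu,\dot y)\,d\nu+\int_0^{\dot y}B_{xy}(x,y,0,\sigma)\,d\sigma\Big)dx-\Big(\int_0^{\dot x}B_{xy}(x,y,\nu,\dot y)\,d\nu+\int_0^{\dot y}B_{yy}(x,y,0,\sigma)\,d\sigma\Big)dy.$$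
   Context: Setting: $M$ is a smooth connected $2$-manifold, $Y=\mathbb{R}\times M$; $J^{1}Y\cong\mathbb{R}\times T^{1}M$, $J^{2}Y\cong\mathbb{R}\times T^{2}M$, with chart coordinates $(t,x,y,\dot x,\dot y)$, $(t,x,y,\dot x,\dot y,\ddot x,\ddot y)$ induced by charts $(x,y)$ on $M$; charts are assumed to have domains on which the segment integrals below make sense (e.g. rectangular in the velocity variables). Contact forms $\omega^x=dx-\dot x dt$, $\omega^y=dy-\dot y dt$. A source form $\varepsilon=(\varepsilon_x\omega^x+\varepsilon_y\omega^y)\wedge dt$ on $\mathbb{R}\times T^2M$ is locally variational iff locally it is the Euler–Lagrange form of a first-order Lagrangian; equivalently in every chart $\varepsilon_x=A_x+B_{xx}\ddot x+B_{xy}\ddot y$, $\varepsilon_y=A_y+B_{xy}\ddot x+B_{yy}\ddot y$ with $A_x,A_y,B_{xx},B_{xy},B_{yy}$ functions of $(x,y,\dot x,\dot y)$ satisfying the Helmholtz conditions: $\partial B_{xx}/\partial\dot y=\partial B_{xy}/\partial\dot x$, $\partial B_{yy}/\partial\dot x=\partial B_{xy}/\partial\dot y$, $\partial A_x/\partial\dot x-\dot x\,\partial B_{xx}/\partial x-\dot y\,\partial B_{xx}/\partial y=0$, $\partial A_y/\partial\dot y-\dot x\,\partial B_{yy}/\partial x-\dot y\,\partial B_{yy}/\partial y=0$, $\partial A_x/\partial\dot y+\partial A_y/\partial\dot x-2\dot x\,\partial B_{xy}/\partial x-2\dot y\,\partial B_{xy}/\partial y=0$, $\partial A_x/\partial y-\partial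 A_y/\partial x-\frac12\dot x\,\partial_x D-\frac12\dot y\,\partial_y D=0$, where $D=\partial A_x/\partial\dot y-\partial A_y/\partial\dot x$ (a function of $(x,y,\dot x,\dot y)$). *)

theory Defs
  imports "HOL-Analysis.Analysis"
begin

text \<open>A fibred chart of J1Y = R x T1M gives coordinates
 (t, x, y, xd, yd); all objects below are t-independent and live on the domain
 U (a subset of R^4) of the induced chart on T1M with coordinates numbered
 0 = x, 1 = y, 2 = xd (x-dot), 3 = yd (y-dot).\<close>

type_synonym chartfun = "real \<Rightarrow> real \<Rightarrow> real \<Rightarrow> real \<Rightarrow> real"

definition pd :: "nat \<Rightarrow> chartfun \<Rightarrow> chartfun" where
  "pd i f x y u v =
     (if i = 0 then deriv (\<lambda>s. f s y u v) x
      else if i = 1 then deriv (\<lambda>s. f x s u v) y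
      else if i = 2 then deriv (\<lambda>s. f x y s v) u
      else deriv (\<lambda>s. f x y u s) v)"

definition pdiff :: "nat \<Rightarrow> chartfun \<Rightarrow> real \<Rightarrow> real \<Rightarrow> real \<Rightarrow> real \<Rightarrow> bool" where
  "pdiff i f x y u v =
     (if i = 0 then (\<lambda>s. f s y u v) differentiable (at x)
      else if i = 1 then (\<lambda>s. f x s u v) differentiable (at y)
      else if i = 2 then (\<lambda>s. f x y s v) differentiable (at u)
      else (\<lambda>s. f x y u s) differentiable (at v))"

fun ipd :: "nat list \<Rightarrow> chartfun \<Rightarrow> chartfun" where
  "ipd [] f = f"
| "ipd (i # is) f = pd i (ipd is f)"

definition smooth_chart :: "(real \<times> real \<times> real \<times> real) set \<Rightarrow> chartfun \<Rightarrow> bool" where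
  "smooth_chart U f \<longleftrightarrow>
     (\<forall>is. continuous_on U (\<lambda>(x, y, u, v). ipd is f x y u v) \<and>
        (\<forall>i<4. \<forall>(x, y, u, v)\<in>U. pdiff i (ipd is f) x y u v))"

definition oint :: "real \<Rightarrow> real \<Rightarrow> (real \<Rightarrow> real) \<Rightarrow> real" where
  "oint a b f = (if a \<le> b then integral {a..b} f else - integral {b..a} f)"

text \<open>Differential forms on U in the coordinates (x, y, xd, yd):
  a 1-form is given by its coefficients (k i) of dq_i, i < 4;
  a 2-form by its coefficient array (w i j), w antisymmetric, representing
  sum over i<j of w i j dq_i wedge dq_j.\<close>
type_synonym form1 = "nat \<Rightarrow> chartfun"
type_synonym form2 = "nat \<Rightarrow> nat \<Rightarrow> chartfun"

definition dq :: "nat \<Rightarrow> form1" where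
  "dq k = (\<lambda>i x y u v. if i = k then 1 else 0)"

definition fscale1 :: "chartfun \<Rightarrow> form1 \<Rightarrow> form1" where
  "fscale1 g a = (\<lambda>i x y u v. g x y u v * a i x y u v)"

definition fscale2 :: "chartfun \<Rightarrow> form2 \<Rightarrow> form2" where
  "fscale2 g w = (\<lambda>i j x y u v. g x y u v * w i j x y u v)"

definition add1 :: "form1 \<Rightarrow> form1 \<Rightarrow> form1" where
  "add1 a b = (\<lambda>i x y u v. a i x y u v + b i x y u v)"

definition add2 :: "form2 \<Rightarrow> form2 \<Rightarrow> form2" where
  "add2 a b = (\<lambda>i j x y u v. a i j x y u v + b i j x y u v)"

definition diff2 :: "form2 \<Rightarrow> form2 \<Rightarrow> form2" where
  "diff2 a b = (\<lambda>i j x y u v. a i j x y u v - b i j x y u v)"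

definition wedge :: "form1 \<Rightarrow> form1 \<Rightarrow> form2" where
  "wedge a b = (\<lambda>i j x y u v. a i x y u v * b j x y u v - a j x y u v * b i x y u v)"

definition ext_d :: "form1 \<Rightarrow> form2" where
  "ext_d k = (\<lambda>i j. pd i (k j) - pd j (k i))"

definition eq2_on :: "(real \<times> real \<times> real \<times> real) set \<Rightarrow> form2 \<Rightarrow> form2 \<Rightarrow> bool" where
  "eq2_on U a b \<longleftrightarrow> (\<forall>i<4. \<forall>j<4. \<forall>(x, y, u, v)\<in>U. a i j x y u v = b i j x y u v)"

text \<open>Admissible chart domain: open, and containing the segments used in the
  integrals (in particular every domain rectangular in the velocity variables
  containing 0 in the velocity rectangle).\<close>
definition admissible_domain :: "(real \<times> real \<times> real \<times> real) set \<Rightarrow> bool" where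
  "admissible_domain U \<longleftrightarrow> open U \<and>
     (\<forall>(x, y, u, v)\<in>U. (\<forall>n\<in>closed_segment 0 u. (x, y, n, v) \<in> U) \<and>
                       (\<forall>s\<in>closed_segment 0 v. (x, y, 0, s) \<in> U))"

definition Dfun :: "chartfun \<Rightarrow> chartfun \<Rightarrow> chartfun" where
  "Dfun Ax Ay = (\<lambda>x y u v. pd 3 Ax x y u v - pd 2 Ay x y u v)"

definition helmholtz :: "(real \<times> real \<times> real \<times> real) set \<Rightarrow>
    chartfun \<Rightarrow> chartfun \<Rightarrow> chartfun \<Rightarrow> chartfun \<Rightarrow> chartfun \<Rightarrow> bool" where
  "helmholtz U Ax Ay Bxx Bxy Byy \<longleftrightarrow>
    (\<forall>(x, y, u, v)\<in>U.
       pd 3 Bxx x y u v = pd 2 Bxy x y u v \<and>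
       pd 2 Byy x y u v = pd 3 Bxy x y u v \<and>
       pd 2 Ax x y u v - u * pd 0 Bxx x y u v - v * pd 1 Bxx x y u v = 0 \<and>
       pd 3 Ay x y u v - u * pd 0 Byy x y u v - v * pd 1 Byy x y u v = 0 \<and>
       pd 3 Ax x y u v + pd 2 Ay x y u v - 2 * u * pd 0 Bxy x y u v
          - 2 * v * pd 1 Bxy x y u v = 0 \<and>
       pd 1 Ax x y u v - pd 0 Ay x y u v - 1/2 * u * pd 0 (Dfun Ax Ay) x y u v
          - 1/2 * v * pd 1 (Dfun Ax Ay) x y u v = 0)"

definition alpha' :: "chartfun \<Rightarrow> chartfun \<Rightarrow> chartfun \<Rightarrow> chartfun \<Rightarrow> chartfun \<Rightarrow> form2" where
  "alpha' Ax Ay Bxx Bxy Byy =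
     add2 (fscale2 (\<lambda>x y u v. 1/2 * Dfun Ax Ay x y u v) (wedge (dq 0) (dq 1)))
      (add2 (wedge (add1 (fscale1 Bxx (dq 0)) (fscale1 Bxy (dq 1))) (dq 2))
            (wedge (add1 (fscale1 Bxy (dq 0)) (fscale1 Byy (dq 1))) (dq 3)))"

definition omega0 :: "chartfun \<Rightarrow> chartfun \<Rightarrow> form2" where
  "omega0 Ax Ay = fscale2 (\<lambda>x y u v. 1/2 * Dfun Ax Ay x y 0 0) (wedge (dq 0) (dq 1))"

definition kappa :: "chartfun \<Rightarrow> chartfun \<Rightarrow> chartfun \<Rightarrow> form1" where
  "kappa Bxx Bxy Byy =
     add1 (fscale1 (\<lambda>x y u v. - (oint 0 u (\<lambda>n. Bxx x y n v) + oint 0 v (\<lambda>s. Bxy x y 0 s))) (dq 0))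
          (fscale1 (\<lambda>x y u v. - (oint 0 u (\<lambda>n. Bxy x y n v) + oint 0 v (\<lambda>s. Byy x y 0 s))) (dq 1))"

end

theory Submission
  imports Defs
begin


type_synonym pt = "real \<times> real \<times> real \<times> real"

definition cf :: "chartfun \<Rightarrow> pt \<Rightarrow> real" where
  "cf f = (\<lambda>(x, y, u, v). f x y u v)"
definition crd :: "nat \<Rightarrow> pt \<Rightarrow> real" where
  "crd i q = (case q of (x,y,u,v) \<Rightarrow> if i = 0 then x else if i = 1 then y else if i = 2 then u else v)"
definition upd :: "nat \<Rightarrow> real \<Rightarrow> pt \<Rightarrow> pt" where
  "upd i s q = (case q of (x,y,u,v) \<Rightarrow> if i = 0 then (s,y,u,v) else if i = 1 then (x,s,u,v)
      else if i = 2 then (x,y,s,v) else (x,y,u,s))"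
definition LD :: "nat \<Rightarrow> (pt \<Rightarrow> real) \<Rightarrow> pt \<Rightarrow> real \<Rightarrow> bool" where
  "LD i F q D \<longleftrightarrow> ((\<lambda>s. F (upd i s q)) has_real_derivative D) (at (crd i q))"

lemma cf_apply[simp]: "cf f (x,y,u,v) = f x y u v" by (simp add: cf_def)

lemma less4: "(i::nat) < 4 \<longleftrightarrow> i = 0 \<or> i = 1 \<or> i = 2 \<or> i = 3" by auto

lemma upd_upd_same[simp]: "upd i a (upd i b q) = upd i a q"
  by (cases q) (auto simp: upd_def)
lemma crd_upd[simp]: "i < 4 \<Longrightarrow> k < 4 \<Longrightarrow> crd k (upd i s q) = (if k = i then s else crd k q)"
  by (cases q) (auto simp: upd_def crd_def less4)
lemma upd_comm: "i < 4 \<Longrightarrow> j < 4 \<Longrightarrow> i \<noteq> j \<Longrightarrow> upd i a (upd j b q) = upd j b (upd i a q)"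
  by (cases q) (auto simp: upd_def less4)
lemma upd_crd[simp]: "upd j (crd j q) q = q"
  by (cases q) (auto simp: upd_def crd_def)

lemma upd_cont: "continuous_on S (\<lambda>s. upd i s q)"
  by (cases q; cases "i = 0"; cases "i = 1"; cases "i = 2") (auto simp: upd_def intro!: continuous_intros)

lemma dist4_le: "dist (x::real,y::real,u::real,v::real) (x',y',u',v') \<le> \<bar>x-x'\<bar> + \<bar>y-y'\<bar> + \<bar>u-u'\<bar> + \<bar>v-v'\<bar>"
proof -
  have "dist (x,y,u,v) (x',y',u',v') \<le> dist x x' + dist (y,u,v) (y',u',v')"
    by (metis (no_types) dist_Pair_Pair sqrt_sum_squares_le_sum_abs abs_of_nonneg zero_le_dist)
  moreover have "dist (y,u,v) (y',u',v') \<le> dist y y' + dist (u,v) (u',v')"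
    by (metis (no_types) dist_Pair_Pair sqrt_sum_squares_le_sum_abs abs_of_nonneg zero_le_dist)
  moreover have "dist (u,v) (u',v') \<le> dist u u' + dist v v'"
    by (metis (no_types) dist_Pair_Pair sqrt_sum_squares_le_sum_abs abs_of_nonneg zero_le_dist)
  ultimately show ?thesis by (simp add: dist_real_def)
qed

lemma dist_upd: "dist (upd i s q) q = \<bar>s - crd i q\<bar>"
  by (cases q) (auto simp: upd_def crd_def dist_Pair_Pair dist_real_def)

lemma upd_eventually:
  assumes "open U" "q \<in> U"
  shows "\<forall>\<^sub>F s in nhds (crd i q). upd i s q \<in> U"
proof -
  have "isCont (\<lambda>s. upd i s q) (crd i q)"
    using upd_cont[of UNIV i q] by (simp add: continuous_on_eq_continuous_at)
  hence "((\<lambda>s. upd i s q) \<longlongrightarrow> q) (nhds (crd i q))"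
    by (metis isCont_def tendsto_at_iff_tendsto_nhds upd_crd)
  thus ?thesis using assms topological_tendstoD by blast
qed

lemma LD_eq_on:
  assumes "open U" "q \<in> U" "\<forall>p\<in>U. F p = G p" "LD i F q D1" "LD i G q D2"
  shows "D1 = D2"
proof -
  have ev: "\<forall>\<^sub>F s in nhds (crd i q). F (upd i s q) = G (upd i s q)"
    using upd_eventually[OF assms(1,2), of i] by eventually_elim (use assms(3) in auto)
  have "((\<lambda>s. G (upd i s q)) has_real_derivative D1) (at (crd i q))"
    using assms(4) unfolding LD_def using DERIV_cong_ev[OF refl ev refl] by blast
  thus ?thesis using assms(5) unfolding LD_def using DERIV_unique by blast
qed

lemma LD_add: "LD i F q a \<Longrightarrow> LD i G q b \<Longrightarrow> LD i (\<lambda>p. F p + G p) q (a + b)"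
  unfolding LD_def by (rule DERIV_add)
lemma LD_diff: "LD i F q a \<Longrightarrow> LD i G q b \<Longrightarrow> LD i (\<lambda>p. F p - G p) q (a - b)"
  unfolding LD_def by (rule DERIV_diff)
lemma LD_mult: "LD i F q a \<Longrightarrow> LD i G q b \<Longrightarrow> LD i (\<lambda>p. F p * G p) q (a * G q + F q * b)"
proof -
  assume a: "LD i F q a" and b: "LD i G q b"
  show ?thesis using DERIV_mult[OF a[unfolded LD_def] b[unfolded LD_def]] unfolding LD_def
    by (simp add: algebra_simps)
qed
lemma LD_const: "LD i (\<lambda>p. c) q 0"
  unfolding LD_def by simp
lemma LD_crd: "i < 4 \<Longrightarrow> k < 4 \<Longrightarrow> LD i (crd k) q (if k = i then 1 else 0)"
  unfolding LD_def by (auto intro!: derivative_eq_intros)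

lemma LD_pdiff:
  assumes "i < 4" "pdiff i f x y u v"
  shows "LD i (cf f) (x,y,u,v) (pd i f x y u v)"
  using assms unfolding LD_def pdiff_def pd_def
  by (auto simp: less4 upd_def crd_def DERIV_deriv_iff_real_differentiable[symmetric])

lemma LD_smooth:
  assumes "smooth_chart U f" "q \<in> U" "i < 4"
  shows "LD i (cf (ipd is f)) q (cf (pd i (ipd is f)) q)"
proof -
  obtain x y u v where q: "q = (x,y,u,v)" by (cases q)
  have "pdiff i (ipd is f) x y u v" using assms q unfolding smooth_chart_def by fastforce
  thus ?thesis using LD_pdiff assms q by simp
qed

lemma smooth_cont:
  assumes "smooth_chart U f"
  shows "continuous_on U (cf (ipd is f))"
  using assms unfolding smooth_chart_def cf_def by blast




lemma schwarz2:
  fixes g gx gy gxy :: "real \<Rightarrow> real \<Rightarrow> real" and a b e gyx :: real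
  assumes e: "e > 0"
  and gx: "\<And>s t. s \<in> ball a e \<Longrightarrow> t \<in> ball b e \<Longrightarrow> ((\<lambda>s. g s t) has_real_derivative gx s t) (at s)"
  and gy: "\<And>s t. s \<in> ball a e \<Longrightarrow> t \<in> ball b e \<Longrightarrow> ((\<lambda>t. g s t) has_real_derivative gy s t) (at t)"
  and gxy: "\<And>s t. s \<in> ball a e \<Longrightarrow> t \<in> ball b e \<Longrightarrow> ((\<lambda>t. gx s t) has_real_derivative gxy s t) (at t)"
  and cont: "continuous_on (ball b e \<times> ball a e) (\<lambda>(t,s). gxy s t)"
  and gyx: "((\<lambda>s. gy s b) has_real_derivative gyx) (at a)"
  shows "gyx = gxy a b"
proof -
  define c where "c = a - e/2"
  have sub: "{c..s} \<subseteq> ball a e" if "s \<in> ball a e" "c \<le> s" for s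
    using that e by (auto simp: c_def dist_real_def)
  have bb: "b \<in> ball b e" using e by simp
  have I0: "((\<lambda>r. gx r t) has_integral (g s t - g c t)) {c..s}"
    if s: "s \<in> ball a e" "c \<le> s" and t: "t \<in> ball b e" for s t
    proof (rule fundamental_theorem_of_calculus[OF s(2)])
      fix r assume "r \<in> {c..s}"
      hence "r \<in> ball a e" using sub[OF s] by auto
      thus "((\<lambda>r. g r t) has_vector_derivative gx r t) (at r within {c..s})"
        using gx[OF _ t] by (simp add: has_real_derivative_iff_has_vector_derivative[symmetric]
            has_field_derivative_at_within)
    qed
  have I: "integral {c..s} (\<lambda>r. gx r t) = g s t - g c t"
    if s: "s \<in> ball a e" "c \<le> s" and t: "t \<in> ball b e" for s t
    using I0[OF s t] by (rule integral_unique)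
  have G: "gy s b - gy c b = integral {c..s} (\<lambda>r. gxy r b)"
    if s: "s \<in> ball a e" "c \<le> s" for s
  proof -
    have cs: "c \<in> ball a e" using e by (simp add: c_def dist_real_def)
    have "((\<lambda>t. integral (cbox c s) (\<lambda>r. gx r t)) has_field_derivative integral (cbox c s) (\<lambda>r. gxy r b)) (at b within ball b e)"
    proof (rule leibniz_rule_field_derivative[where fx="\<lambda>t r. gxy r t"])
      fix t r assume t: "t \<in> ball b e" and r: "r \<in> cbox c s"
      have "r \<in> ball a e" using r sub[OF s] by auto
      thus "((\<lambda>t. gx r t) has_field_derivative gxy r t) (at t within ball b e)"
        using gxy[OF _ t] has_field_derivative_at_within by blast
    next
      fix t assume t: "t \<in> ball b e"
      show "(\<lambda>r. gx r t) integrable_on cbox c s"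
        using I0[OF s t] by (auto simp: cbox_interval)
    next
      show "continuous_on (ball b e \<times> cbox c s) (\<lambda>(t, r). gxy r t)"
        by (rule continuous_on_subset[OF cont]) (use sub[OF s] in auto)
    qed (use bb in auto)
    hence d1: "((\<lambda>t. integral {c..s} (\<lambda>r. gx r t)) has_real_derivative integral {c..s} (\<lambda>r. gxy r b)) (at b)"
      by (simp add: at_within_open[OF bb] cbox_interval)
    have d2: "((\<lambda>t. g s t - g c t) has_real_derivative gy s b - gy c b) (at b)"
      using gy[OF s(1) bb] gy[OF cs bb] by (rule DERIV_diff)
    have ev: "\<forall>\<^sub>F t in nhds b. integral {c..s} (\<lambda>r. gx r t) = g s t - g c t"
      using eventually_nhds_in_open[OF open_ball bb] by eventually_elim (use I[OF s] in auto)
    show ?thesis using d1 d2 DERIV_cong_ev[OF refl ev refl] DERIV_unique by blast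
  qed
  define d where "d = a + e/2"
  have cd: "{c..d} \<subseteq> ball a e" using e by (auto simp: c_def d_def dist_real_def)
  have contb: "continuous_on {c..d} (\<lambda>r. gxy r b)"
  proof -
    have "continuous_on {c..d} ((\<lambda>(t,s). gxy s t) \<circ> (\<lambda>r. (b, r)))"
      by (rule continuous_on_compose[OF _ continuous_on_subset[OF cont]])
         (use cd bb in \<open>auto intro!: continuous_intros\<close>)
    thus ?thesis by (simp add: o_def)
  qed
  have ac: "c < a" "a < d" using e by (auto simp: c_def d_def)
  have "((\<lambda>s. integral {c..s} (\<lambda>r. gxy r b)) has_real_derivative gxy a b) (at a within {c..d})"
    using integral_has_real_derivative[OF contb, of a] ac by simp
  hence "((\<lambda>s. integral {c..s} (\<lambda>r. gxy r b)) has_real_derivative gxy a b) (at a)"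
    using at_within_Icc_at[OF ac] by simp
  hence d3: "((\<lambda>s. gy c b + integral {c..s} (\<lambda>r. gxy r b)) has_real_derivative gxy a b) (at a)"
    by (auto intro!: derivative_eq_intros)
  have ev: "\<forall>\<^sub>F s in nhds a. gy c b + integral {c..s} (\<lambda>r. gxy r b) = gy s b"
  proof -
    have "\<forall>\<^sub>F s in nhds a. s \<in> {c<..<d}" using ac by (intro eventually_nhds_in_open) auto
    thus ?thesis
    proof eventually_elim
      case (elim s)
      hence "s \<in> {c..d}" "c \<le> s" by auto
      hence "s \<in> ball a e" "c \<le> s" using cd by auto
      from G[OF this] show ?case by simp
    qed
  qed
  show ?thesis using d3 DERIV_cong_ev[OF refl ev refl] gyx DERIV_unique by blast
qed




lemma open_box:
  assumes "open U" "q \<in> U"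
  obtains e where "e > 0"
    "\<And>i j s t. i < 4 \<Longrightarrow> j < 4 \<Longrightarrow> \<bar>s - crd i q\<bar> < e \<Longrightarrow> \<bar>t - crd j q\<bar> < e \<Longrightarrow> upd j t (upd i s q) \<in> U"
proof -
  obtain e0 where e0: "e0 > 0" "ball q e0 \<subseteq> U" using assms open_contains_ball by blast
  show ?thesis
  proof (rule that[of "e0/3"])
    fix i j s t assume ij: "i < (4::nat)" "j < (4::nat)" and st: "\<bar>s - crd i q\<bar> < e0/3" "\<bar>t - crd j q\<bar> < e0/3"
    have "dist (upd j t (upd i s q)) q \<le> dist (upd j t (upd i s q)) (upd i s q) + dist (upd i s q) q"
      by (rule dist_triangle)
    also have "\<dots> = \<bar>t - crd j (upd i s q)\<bar> + \<bar>s - crd i q\<bar>" by (simp add: dist_upd)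
    also have "\<dots> < e0" using st ij e0 by (auto split: if_splits simp: abs_if)
    finally show "upd j t (upd i s q) \<in> U" using e0 by (auto simp: dist_commute)
  qed (use e0 in auto)
qed

lemma upd2_cont: "continuous_on S (\<lambda>(t,s). upd j t (upd i s q))"
  by (cases q; cases "i = 0"; cases "i = 1"; cases "i = 2"; cases "j = 0"; cases "j = 1"; cases "j = 2")
     (auto simp: upd_def split_beta intro!: continuous_intros)

lemma upd_aux: "i < 4 \<Longrightarrow> j < 4 \<Longrightarrow> i \<noteq> j \<Longrightarrow> upd i s' (upd j t (upd i s q)) = upd j t (upd i s' q)"
  by (simp add: upd_comm)
lemma upd_aux2: "i < 4 \<Longrightarrow> j < 4 \<Longrightarrow> i \<noteq> j \<Longrightarrow> upd j (crd j q) (upd i s q) = upd i s q"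
  by (metis crd_upd upd_crd)

lemma schwarz_pd:
  assumes U: "open U" and f: "smooth_chart U f" and q: "q \<in> U" and ij: "i < 4" "j < 4"
  shows "cf (pd i (pd j f)) q = cf (pd j (pd i f)) q"
proof (cases "i = j")
  case True thus ?thesis by simp
next
  case False
  obtain e where e: "e > 0" and box: "\<And>i j s t. i < 4 \<Longrightarrow> j < 4 \<Longrightarrow> \<bar>s - crd i q\<bar> < e \<Longrightarrow> \<bar>t - crd j q\<bar> < e \<Longrightarrow> upd j t (upd i s q) \<in> U"
    using open_box[OF U q] by blast
  have inU: "upd j t (upd i s q) \<in> U" if "s \<in> ball (crd i q) e" "t \<in> ball (crd j q) e" for s t
    using box[OF ij] that by (simp add: dist_real_def abs_minus_commute)
  have "cf (pd i (pd j f)) q = cf (pd j (pd i f)) (upd j (crd j q) (upd i (crd i q) q))"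
  proof (rule schwarz2[where g="\<lambda>s t. cf f (upd j t (upd i s q))"
        and gx="\<lambda>s t. cf (pd i f) (upd j t (upd i s q))"
        and gy="\<lambda>s t. cf (pd j f) (upd j t (upd i s q))"
        and gxy="\<lambda>s t. cf (pd j (pd i f)) (upd j t (upd i s q))", OF e])
    fix s t assume st: "s \<in> ball (crd i q) e" "t \<in> ball (crd j q) e"
    note p = inU[OF st]
    have "LD i (cf (ipd [] f)) (upd j t (upd i s q)) (cf (pd i (ipd [] f)) (upd j t (upd i s q)))"
      by (rule LD_smooth[OF f p ij(1)])
    thus "((\<lambda>s. cf f (upd j t (upd i s q))) has_real_derivative cf (pd i f) (upd j t (upd i s q))) (at s)"
      unfolding LD_def using ij False by (simp add: upd_aux)
    have "LD j (cf (ipd [] f)) (upd j t (upd i s q)) (cf (pd j (ipd [] f)) (upd j t (upd i s q)))"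
      by (rule LD_smooth[OF f p ij(2)])
    thus "((\<lambda>t. cf f (upd j t (upd i s q))) has_real_derivative cf (pd j f) (upd j t (upd i s q))) (at t)"
      unfolding LD_def using ij False by simp
    have "LD j (cf (ipd [i] f)) (upd j t (upd i s q)) (cf (pd j (ipd [i] f)) (upd j t (upd i s q)))"
      by (rule LD_smooth[OF f p ij(2)])
    thus "((\<lambda>t. cf (pd i f) (upd j t (upd i s q))) has_real_derivative cf (pd j (pd i f)) (upd j t (upd i s q))) (at t)"
      unfolding LD_def using ij False by simp
  next
    have "continuous_on (ball (crd j q) e \<times> ball (crd i q) e) (cf (ipd [j, i] f) \<circ> (\<lambda>(t,s). upd j t (upd i s q)))"
      by (rule continuous_on_compose[OF upd2_cont continuous_on_subset[OF smooth_cont[OF f]]])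
         (use inU in auto)
    thus "continuous_on (ball (crd j q) e \<times> ball (crd i q) e) (\<lambda>(t, s). cf (pd j (pd i f)) (upd j t (upd i s q)))"
      by (simp add: o_def split_beta)
  next
    have "LD i (cf (ipd [j] f)) q (cf (pd i (ipd [j] f)) q)"
      by (rule LD_smooth[OF f q ij(1)])
    thus "((\<lambda>s. cf (pd j f) (upd j (crd j q) (upd i s q))) has_real_derivative cf (pd i (pd j f)) q) (at (crd i q))"
      unfolding LD_def using ij False by (simp add: upd_aux2)
  qed
  thus ?thesis using ij False by (simp add: upd_aux2)
qed




lemma crd_tup[simp]: "crd i (x,y,u,v) = (if i = 0 then x else if i = 1 then y else if i = 2 then u else v)"
  by (simp add: crd_def)

locale setting =
  fixes U :: "pt set" and Ax Ay Bxx Bxy Byy :: chartfun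
  assumes U: "open U"
    and sAx: "smooth_chart U Ax" and sAy: "smooth_chart U Ay"
    and sBxx: "smooth_chart U Bxx" and sBxy: "smooth_chart U Bxy" and sByy: "smooth_chart U Byy"
    and hh: "helmholtz U Ax Ay Bxx Bxy Byy"
begin

lemma HH: "(x,y,u,v) \<in> U \<Longrightarrow>
       pd 3 Bxx x y u v = pd 2 Bxy x y u v \<and>
       pd 2 Byy x y u v = pd 3 Bxy x y u v \<and>
       pd 2 Ax x y u v - u * pd 0 Bxx x y u v - v * pd 1 Bxx x y u v = 0 \<and>
       pd 3 Ay x y u v - u * pd 0 Byy x y u v - v * pd 1 Byy x y u v = 0 \<and>
       pd 3 Ax x y u v + pd 2 Ay x y u v - 2 * u * pd 0 Bxy x y u v
          - 2 * v * pd 1 Bxy x y u v = 0"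
  using hh unfolding helmholtz_def by fast

lemmas LS = LD_smooth[OF sAx, simplified, folded One_nat_def] LD_smooth[OF sAy, simplified, folded One_nat_def] LD_smooth[OF sBxx, simplified, folded One_nat_def]
  LD_smooth[OF sBxy, simplified, folded One_nat_def] LD_smooth[OF sByy, simplified, folded One_nat_def]

lemma D2:
  assumes q: "q \<in> U"
  shows "cf (pd 2 (pd 3 Ax)) q - cf (pd 2 (pd 2 Ay)) q = 2 * (cf (pd 1 Bxx) q - cf (pd 0 Bxy) q)"
proof -
  note L = LS[OF q]
  have h13_0: "cf (pd 0 (pd 3 Bxx)) q - cf (pd 0 (pd 2 Bxy)) q = 0"
    by (rule LD_eq_on[OF U q _ LD_diff[OF L(3)[of 0 "[3]", simplified, folded One_nat_def] L(4)[of 0 "[2]", simplified, folded One_nat_def]] LD_const])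
       (use HH in force)
  have h13_1: "cf (pd 1 (pd 3 Bxx)) q - cf (pd 1 (pd 2 Bxy)) q = 0"
    by (rule LD_eq_on[OF U q _ LD_diff[OF L(3)[of 1 "[3]", simplified, folded One_nat_def] L(4)[of 1 "[2]", simplified, folded One_nat_def]] LD_const])
       (use HH in force)
  have h3: "cf (pd 3 (pd 2 Ax)) q - (0 * cf (pd 0 Bxx) q + crd 2 q * cf (pd 3 (pd 0 Bxx)) q)
       - (1 * cf (pd 1 Bxx) q + crd 3 q * cf (pd 3 (pd 1 Bxx)) q) = 0"
    by (rule LD_eq_on[OF U q _ LD_diff[OF LD_diff[OF L(1)[of 3 "[2]", simplified, folded One_nat_def]
         LD_mult[OF LD_crd[of 3 2, simplified, folded One_nat_def] L(3)[of 3 "[0]", simplified, folded One_nat_def]]]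
         LD_mult[OF LD_crd[of 3 3, simplified, folded One_nat_def] L(3)[of 3 "[1]", simplified, folded One_nat_def]]] LD_const])
       (use HH in force)
  have h5: "cf (pd 2 (pd 3 Ax)) q + cf (pd 2 (pd 2 Ay)) q
     - ((0 * crd 2 q + 2 * 1) * cf (pd 0 Bxy) q + 2 * crd 2 q * cf (pd 2 (pd 0 Bxy)) q)
     - ((0 * crd 3 q + 2 * 0) * cf (pd 1 Bxy) q + 2 * crd 3 q * cf (pd 2 (pd 1 Bxy)) q) = 0"
    by (rule LD_eq_on[OF U q _ LD_diff[OF LD_diff[OF LD_add[OF L(1)[of 2 "[3]", simplified, folded One_nat_def] L(2)[of 2 "[2]", simplified, folded One_nat_def]]
         LD_mult[OF LD_mult[OF LD_const LD_crd[of 2 2, simplified, folded One_nat_def]] L(4)[of 2 "[0]", simplified, folded One_nat_def]]]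
         LD_mult[OF LD_mult[OF LD_const LD_crd[of 2 3, simplified, folded One_nat_def]] L(4)[of 2 "[1]", simplified, folded One_nat_def]]] LD_const])
       (use HH in force)
  have s1: "cf (pd 2 (pd 3 Ax)) q = cf (pd 3 (pd 2 Ax)) q" by (rule schwarz_pd[OF U sAx q]) auto
  have s2: "cf (pd 3 (pd 0 Bxx)) q = cf (pd 0 (pd 3 Bxx)) q" by (rule schwarz_pd[OF U sBxx q]) auto
  have s3: "cf (pd 3 (pd 1 Bxx)) q = cf (pd 1 (pd 3 Bxx)) q" by (rule schwarz_pd[OF U sBxx q]) auto
  have s4: "cf (pd 2 (pd 0 Bxy)) q = cf (pd 0 (pd 2 Bxy)) q" by (rule schwarz_pd[OF U sBxy q]) auto
  have s5: "cf (pd 2 (pd 1 Bxy)) q = cf (pd 1 (pd 2 Bxy)) q" by (rule schwarz_pd[OF U sBxy q]) auto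
  show ?thesis using h13_0 h13_1 h3 h5 s1 s2 s3 s4 s5 by (simp add: algebra_simps)
qed


lemma D3:
  assumes q: "q \<in> U"
  shows "cf (pd 3 (pd 3 Ax)) q - cf (pd 3 (pd 2 Ay)) q = 2 * (cf (pd 1 Bxy) q - cf (pd 0 Byy) q)"
proof -
  note L = LS[OF q]
  have h2_0: "cf (pd 0 (pd 2 Byy)) q - cf (pd 0 (pd 3 Bxy)) q = 0"
    by (rule LD_eq_on[OF U q _ LD_diff[OF L(5)[of 0 "[2]", simplified, folded One_nat_def] L(4)[of 0 "[3]", simplified, folded One_nat_def]] LD_const])
       (use HH in force)
  have h2_1: "cf (pd 1 (pd 2 Byy)) q - cf (pd 1 (pd 3 Bxy)) q = 0"
    by (rule LD_eq_on[OF U q _ LD_diff[OF L(5)[of 1 "[2]", simplified, folded One_nat_def] L(4)[of 1 "[3]", simplified, folded One_nat_def]] LD_const])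
       (use HH in force)
  have h4: "cf (pd 2 (pd 3 Ay)) q - (1 * cf (pd 0 Byy) q + crd 2 q * cf (pd 2 (pd 0 Byy)) q)
       - (0 * cf (pd 1 Byy) q + crd 3 q * cf (pd 2 (pd 1 Byy)) q) = 0"
    by (rule LD_eq_on[OF U q _ LD_diff[OF LD_diff[OF L(2)[of 2 "[3]", simplified, folded One_nat_def]
         LD_mult[OF LD_crd[of 2 2, simplified, folded One_nat_def] L(5)[of 2 "[0]", simplified, folded One_nat_def]]]
         LD_mult[OF LD_crd[of 2 3, simplified, folded One_nat_def] L(5)[of 2 "[1]", simplified, folded One_nat_def]]] LD_const])
       (use HH in force)
  have h5: "cf (pd 3 (pd 3 Ax)) q + cf (pd 3 (pd 2 Ay)) q
     - ((0 * crd 2 q + 2 * 0) * cf (pd 0 Bxy) q + 2 * crd 2 q * cf (pd 3 (pd 0 Bxy)) q)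
     - ((0 * crd 3 q + 2 * 1) * cf (pd 1 Bxy) q + 2 * crd 3 q * cf (pd 3 (pd 1 Bxy)) q) = 0"
    by (rule LD_eq_on[OF U q _ LD_diff[OF LD_diff[OF LD_add[OF L(1)[of 3 "[3]", simplified, folded One_nat_def] L(2)[of 3 "[2]", simplified, folded One_nat_def]]
         LD_mult[OF LD_mult[OF LD_const LD_crd[of 3 2, simplified, folded One_nat_def]] L(4)[of 3 "[0]", simplified, folded One_nat_def]]]
         LD_mult[OF LD_mult[OF LD_const LD_crd[of 3 3, simplified, folded One_nat_def]] L(4)[of 3 "[1]", simplified, folded One_nat_def]]] LD_const])
       (use HH in force)
  have s1: "cf (pd 3 (pd 2 Ay)) q = cf (pd 2 (pd 3 Ay)) q" by (rule schwarz_pd[OF U sAy q]) auto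
  have s2: "cf (pd 2 (pd 0 Byy)) q = cf (pd 0 (pd 2 Byy)) q" by (rule schwarz_pd[OF U sByy q]) auto
  have s3: "cf (pd 2 (pd 1 Byy)) q = cf (pd 1 (pd 2 Byy)) q" by (rule schwarz_pd[OF U sByy q]) auto
  have s4: "cf (pd 3 (pd 0 Bxy)) q = cf (pd 0 (pd 3 Bxy)) q" by (rule schwarz_pd[OF U sBxy q]) auto
  have s5: "cf (pd 3 (pd 1 Bxy)) q = cf (pd 1 (pd 3 Bxy)) q" by (rule schwarz_pd[OF U sBxy q]) auto
  show ?thesis using h2_0 h2_1 h4 h5 s1 s2 s3 s4 s5 by (simp add: algebra_simps)
qed

end



lemma seg_cases: "closed_segment a (b::real) = {min a b .. max a b}"
  by (auto simp: closed_segment_eq_real_ivl)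

lemma oint_ftc:
  assumes "\<And>n. n \<in> closed_segment a b \<Longrightarrow> (F has_real_derivative f n) (at n)"
  shows "oint a b f = F b - F a"
proof (cases "a \<le> b")
  case True
  have "(f has_integral (F b - F a)) {a..b}"
    by (rule fundamental_theorem_of_calculus[OF True])
       (use assms True in \<open>auto simp: seg_cases has_real_derivative_iff_has_vector_derivative[symmetric]
            intro: has_field_derivative_at_within\<close>)
  thus ?thesis using True by (simp add: oint_def integral_unique)
next
  case False
  have "(f has_integral (F a - F b)) {b..a}"
    by (rule fundamental_theorem_of_calculus)
       (use assms False in \<open>auto simp: seg_cases has_real_derivative_iff_has_vector_derivative[symmetric]
            intro: has_field_derivative_at_within\<close>)
  thus ?thesis using False by (simp add: oint_def integral_unique)
qed

lemma oint_cong: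
  assumes "\<And>n. n \<in> closed_segment a b \<Longrightarrow> f n = g n"
  shows "oint a b f = oint a b g"
  using assms unfolding oint_def seg_cases
  by (auto intro!: integral_cong simp: min_def max_def split: if_splits)

lemma oint_diff:
  assumes "continuous_on (closed_segment a b) f" "continuous_on (closed_segment a b) g"
  shows "oint a b (\<lambda>n. f n - g n) = oint a b f - oint a b g"
  using assms unfolding oint_def seg_cases
  by (auto simp: min_def max_def integral_diff integrable_continuous_real split: if_splits)

lemma oint_deriv_upper:
  assumes e: "e > 0" and c: "continuous_on {min a u - e .. max a u + e} f"
  shows "((\<lambda>w. oint a w f) has_real_derivative f u) (at u)"
proof -
  define c where "c = min a u - e"
  define d where "d = max a u + e"
  have cd: "c < u" "u < d" "c \<le> a" "a \<le> d" using e by (auto simp: c_def d_def)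
  have cont: "continuous_on {c..d} f" using c by (simp add: c_def d_def)
  have int: "f integrable_on {s..t}" if "c \<le> s" "t \<le> d" for s t
    by (rule integrable_continuous_real, rule continuous_on_subset[OF cont]) (use that in auto)
  have eq: "oint a w f = integral {c..w} f - integral {c..a} f" if "w \<in> {c..d}" for w
  proof (cases "a \<le> w")
    case True
    have "integral {c..a} f + integral {a..w} f = integral {c..w} f"
      using Henstock_Kurzweil_Integration.integral_combine[where a=c and c=a and b=w and f=f] True that cd int[of c w] by auto
    thus ?thesis using True by (simp add: oint_def)
  next
    case False
    have "integral {c..w} f + integral {w..a} f = integral {c..a} f"
      using Henstock_Kurzweil_Integration.integral_combine[where a=c and c=w and b=a and f=f] False that cd int[of c a] by auto
    thus ?thesis using False by (simp add: oint_def)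
  qed
  have "((\<lambda>w. integral {c..w} f) has_real_derivative f u) (at u within {c..d})"
    using integral_has_real_derivative[OF cont, of u] cd by simp
  hence "((\<lambda>w. integral {c..w} f) has_real_derivative f u) (at u)"
    using at_within_Icc_at[OF cd(1,2)] by simp
  hence d1: "((\<lambda>w. integral {c..w} f - integral {c..a} f) has_real_derivative f u) (at u)"
    by (auto intro!: derivative_eq_intros)
  have ev: "\<forall>\<^sub>F w in nhds u. integral {c..w} f - integral {c..a} f = oint a w f"
  proof -
    have "\<forall>\<^sub>F w in nhds u. w \<in> {c<..<d}" using cd by (intro eventually_nhds_in_open) auto
    thus ?thesis by eventually_elim (use eq in auto)
  qed
  show ?thesis using d1 DERIV_cong_ev[OF refl ev refl] by blast
qed

lemma oint_leibniz:
  fixes g gw :: "real \<Rightarrow> real \<Rightarrow> real"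
  assumes e: "e > 0"
    and d: "\<And>w n. w \<in> ball w0 e \<Longrightarrow> n \<in> closed_segment a b \<Longrightarrow> ((\<lambda>w. g w n) has_real_derivative gw w n) (at w)"
    and c: "continuous_on (ball w0 e \<times> closed_segment a b) (\<lambda>(w,n). gw w n)"
    and ci: "\<And>w. w \<in> ball w0 e \<Longrightarrow> continuous_on (closed_segment a b) (g w)"
  shows "((\<lambda>w. oint a b (g w)) has_real_derivative oint a b (gw w0)) (at w0)"
proof -
  define l h where "l = min a b" and "h = max a b"
  have w0: "w0 \<in> ball w0 e" using e by simp
  have "((\<lambda>w. integral (cbox l h) (g w)) has_field_derivative integral (cbox l h) (gw w0)) (at w0 within ball w0 e)"
  proof (rule leibniz_rule_field_derivative[OF _ _ _ w0 convex_ball])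
    fix w n assume "w \<in> ball w0 e" "n \<in> cbox l h"
    thus "((\<lambda>w. g w n) has_field_derivative gw w n) (at w within ball w0 e)"
      using d[of w n] by (auto simp: l_def h_def seg_cases intro: has_field_derivative_at_within)
  next
    fix w assume "w \<in> ball w0 e"
    thus "g w integrable_on cbox l h" using ci[of w]
      by (auto simp: l_def h_def seg_cases intro!: integrable_continuous_real)
  next
    show "continuous_on (ball w0 e \<times> cbox l h) (\<lambda>(w,n). gw w n)"
      using c by (simp add: l_def h_def seg_cases)
  qed
  hence D: "((\<lambda>w. integral {l..h} (g w)) has_real_derivative integral {l..h} (gw w0)) (at w0)"
    by (simp add: at_within_open[OF w0] cbox_interval)
  show ?thesis
  proof (cases "a \<le> b")
    case True thus ?thesis using D by (simp add: oint_def l_def h_def)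
  next
    case False thus ?thesis using DERIV_minus[OF D] by (simp add: oint_def l_def h_def)
  qed
qed




lemma upd_tup[simp]: "upd i s (x,y,u,v) = (if i = 0 then (s,y,u,v) else if i = 1 then (x,s,u,v)
      else if i = 2 then (x,y,s,v) else (x,y,u,s))"
  by (simp add: upd_def)

lemma ipd_append: "ipd is (pd i f) = ipd (is @ [i]) f"
  by (induction "is") auto

lemma smooth_pd: "smooth_chart U f \<Longrightarrow> smooth_chart U (pd i f)"
  unfolding smooth_chart_def ipd_append by blast

lemma dirs:
  assumes f: "smooth_chart U f" and p: "(x,y,u,v) \<in> U"
  shows "((\<lambda>s. f s y u v) has_real_derivative pd 0 f x y u v) (at x)"
    "((\<lambda>s. f x s u v) has_real_derivative pd 1 f x y u v) (at y)"
    "((\<lambda>s. f x y s v) has_real_derivative pd 2 f x y u v) (at u)"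
    "((\<lambda>s. f x y u s) has_real_derivative pd 3 f x y u v) (at v)"
proof -
  have "\<forall>i<4. pdiff i (ipd [] f) x y u v" using f p unfolding smooth_chart_def by blast
  hence "pdiff 0 f x y u v" "pdiff 1 f x y u v" "pdiff 2 f x y u v" "pdiff 3 f x y u v" by auto
  thus "((\<lambda>s. f s y u v) has_real_derivative pd 0 f x y u v) (at x)"
    "((\<lambda>s. f x s u v) has_real_derivative pd 1 f x y u v) (at y)"
    "((\<lambda>s. f x y s v) has_real_derivative pd 2 f x y u v) (at u)"
    "((\<lambda>s. f x y u s) has_real_derivative pd 3 f x y u v) (at v)"
    unfolding pdiff_def pd_def by (auto simp: DERIV_deriv_iff_real_differentiable[symmetric])
qed

lemma cont_line:
  assumes "smooth_chart U f" "\<And>z. z \<in> S \<Longrightarrow> h z \<in> U" "continuous_on S h"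
  shows "continuous_on S (\<lambda>z. cf f (h z))"
proof -
  have "continuous_on S (cf (ipd [] f) \<circ> h)"
    by (rule continuous_on_compose[OF assms(3) continuous_on_subset[OF smooth_cont[OF assms(1)]]])
       (use assms(2) in auto)
  thus ?thesis by (simp add: o_def)
qed

lemma near_seg:
  assumes "n \<in> {min a b - r .. max a b + r}" "r \<ge> 0"
  obtains n0 where "n0 \<in> closed_segment a (b::real)" "\<bar>n - n0\<bar> \<le> r"
proof -
  define n0 where "n0 = max (min a b) (min (max a b) n)"
  have "n0 \<in> closed_segment a b" by (auto simp: seg_cases n0_def)
  moreover have "\<bar>n - n0\<bar> \<le> r" using assms unfolding n0_def min_def max_def by (auto split: if_splits)
  ultimately show ?thesis using that by blast
qed




context setting begin

lemmas sm = sAx sAy sBxx sBxy sByy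

lemma pointwise:
  assumes adm: "admissible_domain U" and p: "(x,y,u,v) \<in> U"
  defines "K0 \<equiv> (\<lambda>x y u v. - (oint 0 u (\<lambda>n. Bxx x y n v) + oint 0 v (\<lambda>s. Bxy x y 0 s)))"
    and "K1 \<equiv> (\<lambda>x y u v. - (oint 0 u (\<lambda>n. Bxy x y n v) + oint 0 v (\<lambda>s. Byy x y 0 s)))"
  shows "pd 2 K0 x y u v = - Bxx x y u v" "pd 2 K1 x y u v = - Bxy x y u v"
    "pd 3 K0 x y u v = - Bxy x y u v" "pd 3 K1 x y u v = - Byy x y u v"
    "pd 0 K1 x y u v - pd 1 K0 x y u v = 1/2 * Dfun Ax Ay x y u v - 1/2 * Dfun Ax Ay x y 0 0"
proof -
  define S1 where "S1 = closed_segment 0 u"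
  define S2 where "S2 = closed_segment 0 v"
  define K where "K = (\<lambda>n. (x,y,n,v)) ` S1 \<union> (\<lambda>s. (x,y,0::real,s)) ` S2"
  have KU: "K \<subseteq> U" using adm p unfolding admissible_domain_def K_def S1_def S2_def by fast
  have cK: "compact K" unfolding K_def S1_def S2_def
    by (intro compact_Un compact_continuous_image compact_segment) (auto intro!: continuous_intros)
  obtain e where e: "e > 0" and eb: "\<And>z. z \<in> K \<Longrightarrow> \<exists>G\<in>{U}. ball z e \<subseteq> G"
    using Heine_Borel_lemma[OF cK, of "{U}"] KU U by auto
  have mU1: "(a,b,n',w) \<in> U" if "n \<in> S1" "\<bar>a-x\<bar> + \<bar>b-y\<bar> + \<bar>n'-n\<bar> + \<bar>w-v\<bar> < e" for n a b n' w
  proof -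
    have "ball (x,y,n,v) e \<subseteq> U" using eb[of "(x,y,n,v)"] that(1) by (auto simp: K_def)
    moreover have "dist (x,y,n,v) (a,b,n',w) < e"
      using dist4_le[of x y n v a b n' w] that(2) by (simp add: abs_minus_commute)
    ultimately show ?thesis by auto
  qed
  have mU2: "(a,b,n',w) \<in> U" if "s \<in> S2" "\<bar>a-x\<bar> + \<bar>b-y\<bar> + \<bar>n'\<bar> + \<bar>w-s\<bar> < e" for s a b n' w
  proof -
    have "ball (x,y,0,s) e \<subseteq> U" using eb[of "(x,y,0,s)"] that(1) by (auto simp: K_def)
    moreover have "dist (x,y,0,s) (a,b,n',w) < e"
      using dist4_le[of x y 0 s a b n' w] that(2) by (simp add: abs_minus_commute)
    ultimately show ?thesis by auto
  qed
  have cI1: "continuous_on {min 0 u - e/2 .. max 0 u + e/2} (\<lambda>n. f x y n v)" if f: "smooth_chart U f" for f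
  proof -
    have "continuous_on {min 0 u - e/2 .. max 0 u + e/2} (\<lambda>n. cf f (x,y,n,v))"
    proof (rule cont_line[OF f])
      fix n assume "n \<in> {min 0 u - e/2 .. max 0 u + e/2}"
      then obtain n0 where "n0 \<in> S1" "\<bar>n - n0\<bar> \<le> e/2" using near_seg[of n 0 u "e/2"] e S1_def by auto
      thus "(x,y,n,v) \<in> U" using mU1[of n0 x y n v] e by auto
    qed (auto intro!: continuous_intros)
    thus ?thesis by simp
  qed
  have cI2: "continuous_on {min 0 v - e/2 .. max 0 v + e/2} (\<lambda>s. f x y 0 s)" if f: "smooth_chart U f" for f
  proof -
    have "continuous_on {min 0 v - e/2 .. max 0 v + e/2} (\<lambda>s. cf f (x,y,0,s))"
    proof (rule cont_line[OF f])
      fix s assume "s \<in> {min 0 v - e/2 .. max 0 v + e/2}"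
      then obtain n0 where "n0 \<in> S2" "\<bar>s - n0\<bar> \<le> e/2" using near_seg[of s 0 v "e/2"] e S2_def by auto
      thus "(x,y,0,s) \<in> U" using mU2[of n0 x y 0 s] e by auto
    qed (auto intro!: continuous_intros)
    thus ?thesis by simp
  qed
  have he: "e/2 > 0" using e by simp
  have "((\<lambda>s. K0 x y s v) has_real_derivative - (Bxx x y u v + 0)) (at u)"
    unfolding K0_def by (intro DERIV_minus DERIV_add oint_deriv_upper[OF he cI1[OF sBxx]] DERIV_const)
  thus "pd 2 K0 x y u v = - Bxx x y u v" by (simp add: pd_def DERIV_imp_deriv)
  have "((\<lambda>s. K1 x y s v) has_real_derivative - (Bxy x y u v + 0)) (at u)"
    unfolding K1_def by (intro DERIV_minus DERIV_add oint_deriv_upper[OF he cI1[OF sBxy]] DERIV_const)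
  thus "pd 2 K1 x y u v = - Bxy x y u v" by (simp add: pd_def DERIV_imp_deriv)
  have ball_abs: "\<bar>w - c\<bar> < e" if "w \<in> ball c e" for w c
    using that by (simp add: dist_real_def abs_minus_commute)
  have segU1: "(x,y,n,v) \<in> U" if "n \<in> S1" for n using mU1[OF that, of x y n v] e by simp
  have segU2: "(x,y,0,s) \<in> U" if "s \<in> S2" for s using mU2[OF that, of x y 0 s] e by simp
  have Lv1: "((\<lambda>w. oint 0 u (\<lambda>n. f x y n w)) has_real_derivative oint 0 u (\<lambda>n. pd 3 f x y n v)) (at v)"
    if f: "smooth_chart U f" for f
  proof (rule oint_leibniz[OF e, where g="\<lambda>w n. f x y n w" and gw="\<lambda>w n. pd 3 f x y n w"])
    fix w n assume w: "w \<in> ball v e" and n: "n \<in> closed_segment 0 u"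
    have "(x,y,n,w) \<in> U" using mU1[of n x y n w] ball_abs[OF w] n by (simp add: S1_def)
    thus "((\<lambda>w. f x y n w) has_real_derivative pd 3 f x y n w) (at w)" by (rule dirs(4)[OF f])
  next
    have "continuous_on (ball v e \<times> closed_segment 0 u) (\<lambda>z. cf (pd 3 f) (x,y,snd z,fst z))"
      by (rule cont_line[OF smooth_pd[OF f]])
         (use mU1 ball_abs in \<open>auto simp: S1_def intro!: continuous_intros\<close>)
    thus "continuous_on (ball v e \<times> closed_segment 0 u) (\<lambda>(w,n). pd 3 f x y n w)" by (simp add: split_beta)
  next
    fix w assume w: "w \<in> ball v e"
    have "continuous_on (closed_segment 0 u) (\<lambda>n. cf f (x,y,n,w))"
      by (rule cont_line[OF f]) (use mU1 ball_abs[OF w] in \<open>auto simp: S1_def intro!: continuous_intros\<close>)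
    thus "continuous_on (closed_segment 0 u) (\<lambda>n. f x y n w)" by simp
  qed
  have Lx1: "((\<lambda>a. oint 0 u (\<lambda>n. f a y n v)) has_real_derivative oint 0 u (\<lambda>n. pd 0 f x y n v)) (at x)"
    if f: "smooth_chart U f" for f
  proof (rule oint_leibniz[OF e, where g="\<lambda>a n. f a y n v" and gw="\<lambda>a n. pd 0 f a y n v"])
    fix w n assume w: "w \<in> ball x e" and n: "n \<in> closed_segment 0 u"
    have "(w,y,n,v) \<in> U" using mU1[of n w y n v] ball_abs[OF w] n by (simp add: S1_def)
    thus "((\<lambda>w. f w y n v) has_real_derivative pd 0 f w y n v) (at w)" by (rule dirs(1)[OF f])
  next
    have "continuous_on (ball x e \<times> closed_segment 0 u) (\<lambda>z. cf (pd 0 f) (fst z,y,snd z,v))"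
      by (rule cont_line[OF smooth_pd[OF f]])
         (use mU1 ball_abs in \<open>auto simp: S1_def intro!: continuous_intros\<close>)
    thus "continuous_on (ball x e \<times> closed_segment 0 u) (\<lambda>(w,n). pd 0 f w y n v)" by (simp add: split_beta)
  next
    fix w assume w: "w \<in> ball x e"
    have "continuous_on (closed_segment 0 u) (\<lambda>n. cf f (w,y,n,v))"
      by (rule cont_line[OF f]) (use mU1 ball_abs[OF w] in \<open>auto simp: S1_def intro!: continuous_intros\<close>)
    thus "continuous_on (closed_segment 0 u) (\<lambda>n. f w y n v)" by simp
  qed
  have Ly1: "((\<lambda>b. oint 0 u (\<lambda>n. f x b n v)) has_real_derivative oint 0 u (\<lambda>n. pd 1 f x y n v)) (at y)"
    if f: "smooth_chart U f" for f
  proof (rule oint_leibniz[OF e, where g="\<lambda>b n. f x b n v" and gw="\<lambda>b n. pd 1 f x b n v"])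
    fix w n assume w: "w \<in> ball y e" and n: "n \<in> closed_segment 0 u"
    have "(x,w,n,v) \<in> U" using mU1[of n x w n v] ball_abs[OF w] n by (simp add: S1_def)
    thus "((\<lambda>w. f x w n v) has_real_derivative pd 1 f x w n v) (at w)" by (rule dirs(2)[OF f])
  next
    have "continuous_on (ball y e \<times> closed_segment 0 u) (\<lambda>z. cf (pd 1 f) (x,fst z,snd z,v))"
      by (rule cont_line[OF smooth_pd[OF f]])
         (use mU1 ball_abs in \<open>auto simp: S1_def intro!: continuous_intros\<close>)
    thus "continuous_on (ball y e \<times> closed_segment 0 u) (\<lambda>(w,n). pd 1 f x w n v)" by (simp add: split_beta)
  next
    fix w assume w: "w \<in> ball y e"
    have "continuous_on (closed_segment 0 u) (\<lambda>n. cf f (x,w,n,v))"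
      by (rule cont_line[OF f]) (use mU1 ball_abs[OF w] in \<open>auto simp: S1_def intro!: continuous_intros\<close>)
    thus "continuous_on (closed_segment 0 u) (\<lambda>n. f x w n v)" by simp
  qed
  have Lx2: "((\<lambda>a. oint 0 v (\<lambda>s. f a y 0 s)) has_real_derivative oint 0 v (\<lambda>s. pd 0 f x y 0 s)) (at x)"
    if f: "smooth_chart U f" for f
  proof (rule oint_leibniz[OF e, where g="\<lambda>a s. f a y 0 s" and gw="\<lambda>a s. pd 0 f a y 0 s"])
    fix w n assume w: "w \<in> ball x e" and n: "n \<in> closed_segment 0 v"
    have "(w,y,0,n) \<in> U" using mU2[of n w y 0 n] ball_abs[OF w] n by (simp add: S2_def)
    thus "((\<lambda>w. f w y 0 n) has_real_derivative pd 0 f w y 0 n) (at w)" by (rule dirs(1)[OF f])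
  next
    have "continuous_on (ball x e \<times> closed_segment 0 v) (\<lambda>z. cf (pd 0 f) (fst z,y,0,snd z))"
      by (rule cont_line[OF smooth_pd[OF f]])
         (use mU2 ball_abs in \<open>auto simp: S2_def intro!: continuous_intros\<close>)
    thus "continuous_on (ball x e \<times> closed_segment 0 v) (\<lambda>(w,n). pd 0 f w y 0 n)" by (simp add: split_beta)
  next
    fix w assume w: "w \<in> ball x e"
    have "continuous_on (closed_segment 0 v) (\<lambda>n. cf f (w,y,0,n))"
      by (rule cont_line[OF f]) (use mU2 ball_abs[OF w] in \<open>auto simp: S2_def intro!: continuous_intros\<close>)
    thus "continuous_on (closed_segment 0 v) (\<lambda>n. f w y 0 n)" by simp
  qed
  have Ly2: "((\<lambda>b. oint 0 v (\<lambda>s. f x b 0 s)) has_real_derivative oint 0 v (\<lambda>s. pd 1 f x y 0 s)) (at y)"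
    if f: "smooth_chart U f" for f
  proof (rule oint_leibniz[OF e, where g="\<lambda>b s. f x b 0 s" and gw="\<lambda>b s. pd 1 f x b 0 s"])
    fix w n assume w: "w \<in> ball y e" and n: "n \<in> closed_segment 0 v"
    have "(x,w,0,n) \<in> U" using mU2[of n x w 0 n] ball_abs[OF w] n by (simp add: S2_def)
    thus "((\<lambda>w. f x w 0 n) has_real_derivative pd 1 f x w 0 n) (at w)" by (rule dirs(2)[OF f])
  next
    have "continuous_on (ball y e \<times> closed_segment 0 v) (\<lambda>z. cf (pd 1 f) (x,fst z,0,snd z))"
      by (rule cont_line[OF smooth_pd[OF f]])
         (use mU2 ball_abs in \<open>auto simp: S2_def intro!: continuous_intros\<close>)
    thus "continuous_on (ball y e \<times> closed_segment 0 v) (\<lambda>(w,n). pd 1 f x w 0 n)" by (simp add: split_beta)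
  next
    fix w assume w: "w \<in> ball y e"
    have "continuous_on (closed_segment 0 v) (\<lambda>n. cf f (x,w,0,n))"
      by (rule cont_line[OF f]) (use mU2 ball_abs[OF w] in \<open>auto simp: S2_def intro!: continuous_intros\<close>)
    thus "continuous_on (closed_segment 0 v) (\<lambda>n. f x w 0 n)" by simp
  qed
  have cS1: "continuous_on (closed_segment 0 u) (\<lambda>n. f x y n v)" if f: "smooth_chart U f" for f
  proof -
    have "continuous_on (closed_segment 0 u) (\<lambda>n. cf f (x,y,n,v))"
      by (rule cont_line[OF f]) (use segU1 in \<open>auto simp: S1_def intro!: continuous_intros\<close>)
    thus ?thesis by simp
  qed
  have cS2: "continuous_on (closed_segment 0 v) (\<lambda>s. f x y 0 s)" if f: "smooth_chart U f" for f
  proof -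
    have "continuous_on (closed_segment 0 v) (\<lambda>s. cf f (x,y,0,s))"
      by (rule cont_line[OF f]) (use segU2 in \<open>auto simp: S2_def intro!: continuous_intros\<close>)
    thus ?thesis by simp
  qed
  have "((\<lambda>w. K0 x y u w) has_real_derivative - (oint 0 u (\<lambda>n. pd 3 Bxx x y n v) + Bxy x y 0 v)) (at v)"
    unfolding K0_def by (intro DERIV_minus DERIV_add Lv1[OF sBxx] oint_deriv_upper[OF he cI2[OF sBxy]])
  moreover have "oint 0 u (\<lambda>n. pd 3 Bxx x y n v) = oint 0 u (\<lambda>n. pd 2 Bxy x y n v)"
    by (rule oint_cong) (use HH segU1 in \<open>auto simp: S1_def\<close>)
  moreover have "oint 0 u (\<lambda>n. pd 2 Bxy x y n v) = Bxy x y u v - Bxy x y 0 v"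
    by (rule oint_ftc) (use dirs(3)[OF sBxy] segU1 in \<open>auto simp: S1_def\<close>)
  ultimately show "pd 3 K0 x y u v = - Bxy x y u v" by (simp add: pd_def DERIV_imp_deriv)
  have "((\<lambda>w. K1 x y u w) has_real_derivative - (oint 0 u (\<lambda>n. pd 3 Bxy x y n v) + Byy x y 0 v)) (at v)"
    unfolding K1_def by (intro DERIV_minus DERIV_add Lv1[OF sBxy] oint_deriv_upper[OF he cI2[OF sByy]])
  moreover have "oint 0 u (\<lambda>n. pd 3 Bxy x y n v) = oint 0 u (\<lambda>n. pd 2 Byy x y n v)"
    by (rule oint_cong) (use HH segU1 in \<open>force simp: S1_def\<close>)
  moreover have "oint 0 u (\<lambda>n. pd 2 Byy x y n v) = Byy x y u v - Byy x y 0 v"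
    by (rule oint_ftc) (use dirs(3)[OF sByy] segU1 in \<open>auto simp: S1_def\<close>)
  ultimately show "pd 3 K1 x y u v = - Byy x y u v" by (simp add: pd_def DERIV_imp_deriv)
  have "((\<lambda>a. K1 a y u v) has_real_derivative - (oint 0 u (\<lambda>n. pd 0 Bxy x y n v) + oint 0 v (\<lambda>s. pd 0 Byy x y 0 s))) (at x)"
    unfolding K1_def by (intro DERIV_minus DERIV_add Lx1[OF sBxy] Lx2[OF sByy])
  hence p0: "pd 0 K1 x y u v = - (oint 0 u (\<lambda>n. pd 0 Bxy x y n v) + oint 0 v (\<lambda>s. pd 0 Byy x y 0 s))"
    by (simp add: pd_def DERIV_imp_deriv)
  have "((\<lambda>b. K0 x b u v) has_real_derivative - (oint 0 u (\<lambda>n. pd 1 Bxx x y n v) + oint 0 v (\<lambda>s. pd 1 Bxy x y 0 s))) (at y)"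
    unfolding K0_def by (intro DERIV_minus DERIV_add Ly1[OF sBxx] Ly2[OF sBxy])
  hence p1: "pd 1 K0 x y u v = - (oint 0 u (\<lambda>n. pd 1 Bxx x y n v) + oint 0 v (\<lambda>s. pd 1 Bxy x y 0 s))"
    by (simp add: pd_def DERIV_imp_deriv)
  have o1: "oint 0 u (\<lambda>n. pd 1 Bxx x y n v - pd 0 Bxy x y n v) = oint 0 u (\<lambda>n. pd 1 Bxx x y n v) - oint 0 u (\<lambda>n. pd 0 Bxy x y n v)"
    by (rule oint_diff[OF cS1[OF smooth_pd[OF sBxx]] cS1[OF smooth_pd[OF sBxy]]])
  have o2: "oint 0 v (\<lambda>s. pd 1 Bxy x y 0 s - pd 0 Byy x y 0 s) = oint 0 v (\<lambda>s. pd 1 Bxy x y 0 s) - oint 0 v (\<lambda>s. pd 0 Byy x y 0 s)"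
    by (rule oint_diff[OF cS2[OF smooth_pd[OF sBxy]] cS2[OF smooth_pd[OF sByy]]])
  have f1: "oint 0 u (\<lambda>n. pd 1 Bxx x y n v - pd 0 Bxy x y n v) = Dfun Ax Ay x y u v / 2 - Dfun Ax Ay x y 0 v / 2"
  proof (rule oint_ftc)
    fix n assume "n \<in> closed_segment 0 u"
    hence nU: "(x,y,n,v) \<in> U" using segU1 by (simp add: S1_def)
    have "((\<lambda>s. (pd 3 Ax x y s v - pd 2 Ay x y s v) / 2) has_real_derivative
        (pd 2 (pd 3 Ax) x y n v - pd 2 (pd 2 Ay) x y n v) / 2) (at n)"
      by (intro DERIV_cdivide DERIV_diff dirs(3)[OF smooth_pd[OF sAx] nU] dirs(3)[OF smooth_pd[OF sAy] nU])
    moreover have eq: "(pd 2 (pd 3 Ax) x y n v - pd 2 (pd 2 Ay) x y n v) / 2 = pd 1 Bxx x y n v - pd 0 Bxy x y n v"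
      using D2[OF nU] by simp
    ultimately show "((\<lambda>s. Dfun Ax Ay x y s v / 2) has_real_derivative pd 1 Bxx x y n v - pd 0 Bxy x y n v) (at n)"
      unfolding Dfun_def by (simp only:)
  qed
  have f2: "oint 0 v (\<lambda>s. pd 1 Bxy x y 0 s - pd 0 Byy x y 0 s) = Dfun Ax Ay x y 0 v / 2 - Dfun Ax Ay x y 0 0 / 2"
  proof (rule oint_ftc)
    fix n assume "n \<in> closed_segment 0 v"
    hence nU: "(x,y,0,n) \<in> U" using segU2 by (simp add: S2_def)
    have "((\<lambda>s. (pd 3 Ax x y 0 s - pd 2 Ay x y 0 s) / 2) has_real_derivative
        (pd 3 (pd 3 Ax) x y 0 n - pd 3 (pd 2 Ay) x y 0 n) / 2) (at n)"
      by (intro DERIV_cdivide DERIV_diff dirs(4)[OF smooth_pd[OF sAx] nU] dirs(4)[OF smooth_pd[OF sAy] nU])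
    moreover have eq: "(pd 3 (pd 3 Ax) x y 0 n - pd 3 (pd 2 Ay) x y 0 n) / 2 = pd 1 Bxy x y 0 n - pd 0 Byy x y 0 n"
      using D3[OF nU] by simp
    ultimately show "((\<lambda>s. Dfun Ax Ay x y 0 s / 2) has_real_derivative pd 1 Bxy x y 0 n - pd 0 Byy x y 0 n) (at n)"
      unfolding Dfun_def by (simp only:)
  qed
  show "pd 0 K1 x y u v - pd 1 K0 x y u v = 1/2 * Dfun Ax Ay x y u v - 1/2 * Dfun Ax Ay x y 0 0"
    using p0 p1 o1 o2 f1 f2 by (simp add: algebra_simps)
qed

end



context setting begin

lemma final:
  assumes adm: "admissible_domain U"
  shows "eq2_on U (diff2 (alpha' Ax Ay Bxx Bxy Byy) (omega0 Ax Ay)) (ext_d (kappa Bxx Bxy Byy))"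
proof -
  define K0 where "K0 \<equiv> (\<lambda>x y u v. - (oint 0 u (\<lambda>n. Bxx x y n v) + oint 0 v (\<lambda>s. Bxy x y 0 s)))"
  define K1 where "K1 \<equiv> (\<lambda>x y u v. - (oint 0 u (\<lambda>n. Bxy x y n v) + oint 0 v (\<lambda>s. Byy x y 0 s)))"
  have k0: "kappa Bxx Bxy Byy 0 = K0" by (simp add: kappa_def add1_def fscale1_def dq_def K0_def fun_eq_iff)
  have k1: "kappa Bxx Bxy Byy 1 = K1" by (simp add: kappa_def add1_def fscale1_def dq_def K1_def fun_eq_iff)
  have k2: "kappa Bxx Bxy Byy 2 = (\<lambda>x y u v. 0)" by (simp add: kappa_def add1_def fscale1_def dq_def fun_eq_iff)
  have k3: "kappa Bxx Bxy Byy 3 = (\<lambda>x y u v. 0)" by (simp add: kappa_def add1_def fscale1_def dq_def fun_eq_iff)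
  have z: "pd i (\<lambda>x y u v. 0) x y u v = 0" for i x y u v by (simp add: pd_def)
  show ?thesis unfolding eq2_on_def
  proof (intro allI impI, clarify)
    fix i j x y u v assume ij: "i < (4::nat)" "j < (4::nat)" and p: "(x,y,u,v) \<in> U"
    note P = pointwise[OF adm p, folded K0_def K1_def]
    have P': "pd 0 K1 x y u v = pd 1 K0 x y u v + (1/2 * Dfun Ax Ay x y u v - 1/2 * Dfun Ax Ay x y 0 0)"
      using P(5) by simp
    show "diff2 (alpha' Ax Ay Bxx Bxy Byy) (omega0 Ax Ay) i j x y u v = ext_d (kappa Bxx Bxy Byy) i j x y u v"
      using ij unfolding less4
      by (elim disjE; simp add: diff2_def alpha'_def omega0_def add2_def fscale2_def wedge_def add1_def
           fscale1_def dq_def ext_d_def k0 k1 k1[unfolded One_nat_def] k2 k3 z P(1-4) P')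
  qed
qed

end

theorem theorem3p3:
  fixes U :: "(real \<times> real \<times> real \<times> real) set"
    and Ax Ay Bxx Bxy Byy :: chartfun
  assumes "admissible_domain U"
    and "smooth_chart U Ax" "smooth_chart U Ay"
    and "smooth_chart U Bxx" "smooth_chart U Bxy" "smooth_chart U Byy"
    and "helmholtz U Ax Ay Bxx Bxy Byy"
  shows "eq2_on U (diff2 (alpha' Ax Ay Bxx Bxy Byy) (omega0 Ax Ay)) (ext_d (kappa Bxx Bxy Byy))"
proof -
  interpret setting U Ax Ay Bxx Bxy Byy
    using assms by unfold_locales (auto simp: admissible_domain_def)
  show ?thesis by (rule final[OF assms(1)])
qed

end
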